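(* Let $n\ge 2$ and $d_1\ge d_2\ge\cdots\ge d_n\ge 2$ be integers, and let $H=\mathbb{C}^{d_1}\otimes\mathbb{C}^{d_2}\otimes\cdots\otimes\mathbb{C}^{d_n}$. If $d_1<\prod_{i=2}^n d_i$, then $H$ contains no stochastic maximum entangled state; that is, there is no $|\phi_0\rangle\in H$ such that $|\phi\rangle\le_{\mathrm{SLOCC}}|\phi_0\rangle$ for every $|\phi\rangle\in H$.
   Context: For states $|\phi\rangle,|\psi\rangle\in H$ (the $i$-th tensor factor being held by party $i$), write $|\psi\rangle\le_{\mathrm{SLOCC}}|\phi\rangle$ if $|\phi\rangle$ can be transformed into $|\psi\rangle$ with nonzero probability by local quantum operations and classical communication; equivalently, there exist linear operators $L_i$ on $\mathbb{C}^{d_i}$ ($i=1,\dots,n$) with $(L_1\otimes\cdots\otimes L_n)|\phi\rangle=|\psi\rangle$. A stochastic maximum entangled state is a state $|\phi_0\rangle$ with $|\phi\rangle\le_{\mathrm{SLOCC}}|\phi_0\rangle$ for all $|\phi\rangle\in H$. *)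

theory Defs
  imports Complex_Main
begin

text \<open>Parties are indexed 0,...,n-1; party i holds the factor C^(d i).
  A basis index of H = C^(d 0) (x) ... (x) C^(d (n-1)) is a function
  f :: nat => nat with f i < d i for i < n and f i = 0 for i >= n.
  A vector of H is a complex-valued function on these indices (zero elsewhere).\<close>

definition tidx :: "nat \<Rightarrow> (nat \<Rightarrow> nat) \<Rightarrow> (nat \<Rightarrow> nat) set" where
  "tidx n d = {f. (\<forall>i<n. f i < d i) \<and> (\<forall>i\<ge>n. f i = 0)}"

definition in_H :: "nat \<Rightarrow> (nat \<Rightarrow> nat) \<Rightarrow> ((nat \<Rightarrow> nat) \<Rightarrow> complex) \<Rightarrow> bool" where
  "in_H n d \<psi> \<longleftrightarrow> (\<forall>f. f \<notin> tidx n d \<longrightarrow> \<psi> f = 0)"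

text \<open>L i is the (d i x d i) matrix of party i: entry (r, c) is L i r c
  (entries outside the range are irrelevant). Application of L 0 (x) ... (x) L (n-1).\<close>

definition local_apply ::
  "nat \<Rightarrow> (nat \<Rightarrow> nat) \<Rightarrow> (nat \<Rightarrow> nat \<Rightarrow> nat \<Rightarrow> complex) \<Rightarrow> ((nat \<Rightarrow> nat) \<Rightarrow> complex)
   \<Rightarrow> ((nat \<Rightarrow> nat) \<Rightarrow> complex)" where
  "local_apply n d L \<phi> = (\<lambda>f. if f \<in> tidx n d
      then (\<Sum>g\<in>tidx n d. (\<Prod>i<n. L i (f i) (g i)) * \<phi> g) else 0)"

definition slocc_le ::
  "nat \<Rightarrow> (nat \<Rightarrow> nat) \<Rightarrow> ((nat \<Rightarrow> nat) \<Rightarrow> complex) \<Rightarrow> ((nat \<Rightarrow> nat) \<Rightarrow> complex) \<Rightarrow> bool" where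
  "slocc_le n d \<psi> \<phi> \<longleftrightarrow> (\<exists>L. local_apply n d L \<phi> = \<psi>)"

definition stoch_max_entangled ::
  "nat \<Rightarrow> (nat \<Rightarrow> nat) \<Rightarrow> ((nat \<Rightarrow> nat) \<Rightarrow> complex) \<Rightarrow> bool" where
  "stoch_max_entangled n d \<phi>0 \<longleftrightarrow>
     in_H n d \<phi>0 \<and> (\<forall>\<phi>. in_H n d \<phi> \<longrightarrow> slocc_le n d \<phi> \<phi>0)"

end

theory Submission
  imports Defs "Jordan_Normal_Form.Determinant"
begin

lemma mat_inv:
  fixes M :: "nat \<Rightarrow> nat \<Rightarrow> complex" and m :: nat
  assumes lk: "\<And>v. (\<forall>c<m. (\<Sum>r<m. v r * M r c) = 0) \<Longrightarrow> (\<forall>r<m. v r = 0)"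
  shows "\<exists>N. (\<forall>r<m. \<forall>c<m. (\<Sum>k<m. N r k * M k c) = (if r = c then 1 else 0)) \<and>
             (\<forall>r<m. \<forall>c<m. (\<Sum>k<m. M r k * N k c) = (if r = c then 1 else 0))"
proof -
  define A where "A = mat m m (\<lambda>(r,c). M r c)"
  have A: "A \<in> carrier_mat m m" unfolding A_def by auto
  have At: "transpose_mat A \<in> carrier_mat m m" using A by auto
  have "det A \<noteq> 0"
  proof
    assume "det A = 0"
    hence "det (transpose_mat A) = 0" using det_transpose[OF A] by simp
    then obtain v where v: "v \<in> carrier_vec m" "v \<noteq> 0\<^sub>v m" "transpose_mat A *\<^sub>v v = 0\<^sub>v m"
      using det_0_iff_vec_prod_zero[OF At] by auto
    have "\<forall>c<m. (\<Sum>r<m. (v $ r) * M r c) = 0"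
    proof (intro allI impI)
      fix c assume c: "c < m"
      have "(transpose_mat A *\<^sub>v v) $ c = 0" using v(3) c by simp
      hence "(\<Sum>r<m. M r c * v $ r) = 0" using c v(1) A
        by (simp add: mult_mat_vec_def scalar_prod_def A_def lessThan_atLeast0)
      thus "(\<Sum>r<m. (v $ r) * M r c) = 0" by (simp add: mult.commute)
    qed
    hence "\<forall>r<m. v $ r = 0" using lk by blast
    hence "v = 0\<^sub>v m" using v(1) by (intro eq_vecI) auto
    with v(2) show False by simp
  qed
  from det_non_zero_imp_unit[OF A this, unfolded Units_def ring_mat_def, of "()"]
  obtain B where B: "B \<in> carrier_mat m m" "B * A = 1\<^sub>m m" "A * B = 1\<^sub>m m" by auto
  show ?thesis
  proof (intro exI[of _ "\<lambda>r c. B $$ (r,c)"] conjI allI impI)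
    fix r c assume rc: "r < m" "c < m"
    have "(B * A) $$ (r,c) = (if r = c then 1 else 0)" using B(2) rc by simp
    thus "(\<Sum>k<m. B $$ (r,k) * M k c) = (if r = c then 1 else 0)" using rc A B(1)
      by (simp add: scalar_prod_def A_def lessThan_atLeast0 row_def col_def)
    have "(A * B) $$ (r,c) = (if r = c then 1 else 0)" using B(3) rc by simp
    thus "(\<Sum>k<m. M r k * B $$ (k,c)) = (if r = c then 1 else 0)" using rc A B(1)
      by (simp add: scalar_prod_def A_def lessThan_atLeast0 row_def col_def)
  qed
qed

lemma tidx_0: "tidx 0 d = {\<lambda>_. 0}"
  unfolding tidx_def by auto

lemma tidx_Suc: "tidx (Suc n) d = (\<lambda>(g,k). g(n:=k)) ` (tidx n d \<times> {..<d n})"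
proof (intro equalityI subsetI)
  fix f assume f: "f \<in> tidx (Suc n) d"
  have "f(n:=0) \<in> tidx n d" "f n < d n" using f unfolding tidx_def by auto
  moreover have "f = (f(n:=0))(n := f n)" by simp
  ultimately show "f \<in> (\<lambda>(g,k). g(n:=k)) ` (tidx n d \<times> {..<d n})"
    by (intro image_eqI[of _ _ "(f(n:=0), f n)"]) auto
next
  fix f assume "f \<in> (\<lambda>(g,k). g(n:=k)) ` (tidx n d \<times> {..<d n})"
  then obtain g k where "g \<in> tidx n d" "k < d n" "f = g(n:=k)" by auto
  thus "f \<in> tidx (Suc n) d" unfolding tidx_def by auto
qed

lemma tidx_inj: "inj_on (\<lambda>(g,k). g(n:=k)) (tidx n d \<times> {..<d n})"
proof (rule inj_onI, clarify)
  fix g k g' k' assume a: "g \<in> tidx n d" "g' \<in> tidx n d" "g(n:=k) = g'(n:=k')"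
  have "k = k'" using fun_upd_eqD[OF a(3)] by (metis fun_upd_same)
  moreover have "g = g'"
  proof
    fix i show "g i = g' i"
    proof (cases "i = n")
      case True thus ?thesis using a(1,2) unfolding tidx_def by auto
    next
      case False thus ?thesis using fun_cong[OF a(3), of i] by auto
    qed
  qed
  ultimately show "g = g' \<and> k = k'" by simp
qed

lemma finite_tidx: "finite (tidx n d)"
  by (induction n) (auto simp: tidx_0 tidx_Suc)

lemma prodsum:
  "(\<Sum>g\<in>tidx n d. \<Prod>i<n. a i (g i)) = (\<Prod>i<n. \<Sum>k<d i. (a i k :: complex))"
proof (induction n)
  case 0 thus ?case by (simp add: tidx_0)
next
  case (Suc n)
  have "(\<Sum>g\<in>tidx (Suc n) d. \<Prod>i<Suc n. a i (g i))
      = (\<Sum>(g,k)\<in>tidx n d \<times> {..<d n}. \<Prod>i<Suc n. a i ((g(n:=k)) i))"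
    unfolding tidx_Suc by (subst sum.reindex[OF tidx_inj]) (simp add: case_prod_beta)
  also have "\<dots> = (\<Sum>(g,k)\<in>tidx n d \<times> {..<d n}. (\<Prod>i<n. a i (g i)) * a n k)"
    by (intro sum.cong refl) (auto simp: lessThan_Suc intro!: prod.cong)
  also have "\<dots> = (\<Sum>g\<in>tidx n d. \<Prod>i<n. a i (g i)) * (\<Sum>k<d n. a n k)"
    by (simp add: sum_product sum.cartesian_product)
  finally show ?case using Suc by (simp add: lessThan_Suc mult.commute)
qed

lemma la_eval: "f \<in> tidx n d \<Longrightarrow>
  local_apply n d L \<phi> f = (\<Sum>g\<in>tidx n d. (\<Prod>i<n. L i (f i) (g i)) * \<phi> g)"
  unfolding local_apply_def by simp

lemma la_out: "f \<notin> tidx n d \<Longrightarrow> local_apply n d L \<phi> f = 0"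
  unfolding local_apply_def by simp

lemma la_H: "in_H n d (local_apply n d L \<phi>)"
  unfolding in_H_def by (simp add: la_out)

lemma tidx_eq: assumes "f \<in> tidx n d" "g \<in> tidx n d" "\<forall>i<n. f i = g i" shows "f = g"
proof (rule ext)
  fix i show "f i = g i" using assms by (cases "i < n") (auto simp: tidx_def)
qed

lemma la_comp: "local_apply n d M (local_apply n d L \<phi>) =
   local_apply n d (\<lambda>i r c. \<Sum>k<d i. M i r k * L i k c) \<phi>"
proof (rule ext)
  fix f show "local_apply n d M (local_apply n d L \<phi>) f =
   local_apply n d (\<lambda>i r c. \<Sum>k<d i. M i r k * L i k c) \<phi> f"
  proof (cases "f \<in> tidx n d")
    case False thus ?thesis by (simp add: la_out)
  next
    case True
    have "local_apply n d M (local_apply n d L \<phi>) f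
       = (\<Sum>g\<in>tidx n d. (\<Prod>i<n. M i (f i) (g i)) * (\<Sum>h\<in>tidx n d. (\<Prod>i<n. L i (g i) (h i)) * \<phi> h))"
      unfolding la_eval[OF True] by (rule sum.cong[OF refl]) (simp add: la_eval)
    also have "\<dots> = (\<Sum>h\<in>tidx n d. (\<Sum>g\<in>tidx n d. (\<Prod>i<n. M i (f i) (g i) * L i (g i) (h i))) * \<phi> h)"
    proof -
      have "(\<Sum>g\<in>tidx n d. (\<Prod>i<n. M i (f i) (g i)) * (\<Sum>h\<in>tidx n d. (\<Prod>i<n. L i (g i) (h i)) * \<phi> h))
         = (\<Sum>g\<in>tidx n d. \<Sum>h\<in>tidx n d. (\<Prod>i<n. M i (f i) (g i) * L i (g i) (h i)) * \<phi> h)"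
        by (simp only: sum_distrib_left prod.distrib mult.assoc)
      also have "\<dots> = (\<Sum>h\<in>tidx n d. \<Sum>g\<in>tidx n d. (\<Prod>i<n. M i (f i) (g i) * L i (g i) (h i)) * \<phi> h)"
        by (rule sum.swap)
      also have "\<dots> = (\<Sum>h\<in>tidx n d. (\<Sum>g\<in>tidx n d. (\<Prod>i<n. M i (f i) (g i) * L i (g i) (h i))) * \<phi> h)"
        by (simp only: sum_distrib_right)
      finally show ?thesis .
    qed
    also have "\<dots> = (\<Sum>h\<in>tidx n d. (\<Prod>i<n. \<Sum>k<d i. M i (f i) k * L i k (h i)) * \<phi> h)"
    proof (rule sum.cong[OF refl], rule arg_cong2[where f="(*)"])
      fix h show "(\<Sum>g\<in>tidx n d. (\<Prod>i<n. M i (f i) (g i) * L i (g i) (h i))) = (\<Prod>i<n. \<Sum>k<d i. M i (f i) k * L i k (h i))"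
        using prodsum[where n=n and d=d and a="\<lambda>i k. M i (f i) k * L i k (h i)"] by simp
    qed (rule refl)
    also have "\<dots> = local_apply n d (\<lambda>i r c. \<Sum>k<d i. M i r k * L i k c) \<phi> f"
      unfolding la_eval[OF True] by (rule refl)
    finally show ?thesis .
  qed
qed

lemma la_id: assumes "in_H n d \<phi>"
  shows "local_apply n d (\<lambda>i r c. if r = c then 1 else 0) \<phi> = \<phi>"
proof (rule ext)
  fix f show "local_apply n d (\<lambda>i r c. if r = c then 1 else 0) \<phi> f = \<phi> f"
  proof (cases "f \<in> tidx n d")
    case False thus ?thesis using assms by (simp add: la_out in_H_def)
  next
    case True
    have "local_apply n d (\<lambda>i r c. if r = c then 1 else 0) \<phi> f
       = (\<Sum>g\<in>tidx n d. (if g = f then \<phi> g else 0))"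
      unfolding la_eval[OF True]
    proof (intro sum.cong refl)
      fix g assume g: "g \<in> tidx n d"
      show "(\<Prod>i<n. if f i = g i then 1 else 0) * \<phi> g = (if g = f then \<phi> g else 0)"
      proof (cases "\<forall>i<n. f i = g i")
        case True
        hence "g = f" using tidx_eq[OF \<open>f \<in> tidx n d\<close> g] by simp
        thus ?thesis by simp
      next
        case False
        then obtain i where "i < n" "f i \<noteq> g i" by auto
        hence "(\<Prod>i<n. if f i = g i then 1 else (0::complex)) = 0"
          by (intro prod_zero) auto
        moreover have "g \<noteq> f" using \<open>f i \<noteq> g i\<close> by auto
        ultimately show ?thesis by simp
      qed
    qed
    also have "\<dots> = \<phi> f" using True by (simp add: finite_tidx)
    finally show ?thesis .
  qed
qed

definition Rt :: "nat \<Rightarrow> (nat \<Rightarrow> nat) \<Rightarrow> (nat \<Rightarrow> nat) set" where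
  "Rt n d = {x \<in> tidx n d. x 0 = 0}"

lemma Rt_eq: "0 < n \<Longrightarrow> 0 < d 0 \<Longrightarrow> Rt n d = tidx n (d(0:=1))"
  unfolding Rt_def tidx_def by auto

lemma finite_Rt: "finite (Rt n d)"
  unfolding Rt_def using finite_tidx by auto

lemma prodsum_R: assumes "0 < n" "0 < d 0"
  shows "(\<Sum>x\<in>Rt n d. \<Prod>i\<in>{1..<n}. a i (x i)) = (\<Prod>i\<in>{1..<n}. \<Sum>k<d i. (a i k :: complex))"
proof -
  define a' where "a' = (\<lambda>i. if i = 0 then (\<lambda>_. 1) else a i)"
  have split: "{..<n} = insert 0 {1..<n}" using assms by auto
  have e1: "(\<Prod>i<n. a' i (x i)) = (\<Prod>i\<in>{1..<n}. a i (x i))" for x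
  proof -
    have "(\<Prod>i<n. a' i (x i)) = a' 0 (x 0) * (\<Prod>i\<in>{1..<n}. a' i (x i))"
      unfolding split by (simp add: prod.insert)
    also have "\<dots> = (\<Prod>i\<in>{1..<n}. a i (x i))"
      by (auto simp: a'_def intro!: prod.cong)
    finally show ?thesis .
  qed
  have e2: "(\<Prod>i<n. \<Sum>k<(d(0:=1)) i. a' i k) = (\<Prod>i\<in>{1..<n}. \<Sum>k<d i. a i k)"
  proof -
    have "(\<Prod>i<n. \<Sum>k<(d(0:=1)) i. a' i k) = (\<Sum>k<(d(0:=1)) 0. a' 0 k) * (\<Prod>i\<in>{1..<n}. \<Sum>k<(d(0:=1)) i. a' i k)"
      unfolding split by (simp add: prod.insert)
    also have "\<dots> = (\<Prod>i\<in>{1..<n}. \<Sum>k<d i. a i k)"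
      by (auto simp: a'_def intro!: prod.cong)
    finally show ?thesis .
  qed
  have "(\<Sum>x\<in>Rt n d. \<Prod>i\<in>{1..<n}. a i (x i)) = (\<Sum>x\<in>tidx n (d(0:=1)). \<Prod>i<n. a' i (x i))"
    unfolding Rt_eq[where n=n and d=d, OF assms] e1 ..
  also have "\<dots> = (\<Prod>i<n. \<Sum>k<(d(0:=1)) i. a' i k)" by (rule prodsum)
  finally show ?thesis unfolding e2 .
qed

lemma card_Rt: assumes "0 < n" "0 < d 0" shows "card (Rt n d) = (\<Prod>i\<in>{1..<n}. d i)"
proof -
  have "of_nat (card (Rt n d)) = (\<Sum>x\<in>Rt n d. \<Prod>i\<in>{1..<n}. (\<lambda>i k. 1::complex) i (x i))" by simp
  also have "\<dots> = of_nat (\<Prod>i\<in>{1..<n}. d i)" by (subst prodsum_R[where n=n and d=d, OF assms]) simp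
  finally show ?thesis by (simp only: of_nat_eq_iff)
qed

lemma la_cong: assumes "\<And>i r c. i < n \<Longrightarrow> r < d i \<Longrightarrow> c < d i \<Longrightarrow> L i r c = L' i r c"
  shows "local_apply n d L \<phi> = local_apply n d L' \<phi>"
  unfolding local_apply_def
  by (intro ext if_cong refl sum.cong arg_cong2[where f="(*)"] prod.cong) (auto simp: tidx_def assms)

definition T :: "nat \<Rightarrow> (nat \<Rightarrow> nat) \<Rightarrow> (nat \<Rightarrow> (nat \<Rightarrow> nat) \<Rightarrow> complex) \<Rightarrow> ((nat \<Rightarrow> nat) \<Rightarrow> complex)" where
  "T n d w = (\<lambda>g. if g \<in> tidx n d then w (g 0) (g(0:=0)) else 0)"

lemma T_H: "in_H n d (T n d w)" unfolding in_H_def T_def by simp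

lemma T_at: assumes "x \<in> Rt n d" "k < d 0" "0 < n" shows "T n d w (x(0:=k)) = w k x"
proof -
  have "x(0:=k) \<in> tidx n d" using assms unfolding Rt_def tidx_def by auto
  moreover have "(x(0:=k))(0:=0) = x" using assms unfolding Rt_def by auto
  ultimately show ?thesis unfolding T_def by simp
qed

lemma prod_split0: fixes n :: nat assumes "0 < n"
  shows "(\<Prod>i<n. F i) = F 0 * (\<Prod>i\<in>{1..<n}. F i)"
proof -
  have "{..<n} = insert 0 {1..<n}" using assms by (auto simp: not_le)
  thus ?thesis by (simp add: prod.insert)
qed

lemma key:
  assumes n: "0 < n" and bR: "\<And>j. j < d 0 \<Longrightarrow> \<beta> j \<in> Rt n d" and f: "f \<in> tidx n d"
  shows "local_apply n d C (T n d (\<lambda>k x. if x = \<beta> k then 1 else 0)) f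
       = (\<Sum>j<d 0. C 0 (f 0) j * (\<Prod>i\<in>{1..<n}. C i (f i) (\<beta> j i)))"
proof -
  define G where "G = (\<lambda>j. (\<beta> j)(0:=j)) ` {..<d 0}"
  define F where "F = (\<lambda>g. \<Prod>i<n. C i (f i) (g i))"
  have Tv: "T n d (\<lambda>k x. if x = \<beta> k then 1 else 0) g = (if g \<in> G then 1 else 0)"
    if g: "g \<in> tidx n d" for g
  proof -
    have g0: "g 0 < d 0" using g n unfolding tidx_def by auto
    have "g(0:=0) = \<beta> (g 0) \<longleftrightarrow> g \<in> G"
    proof
      assume "g(0:=0) = \<beta> (g 0)"
      hence "g = (\<beta> (g 0))(0 := g 0)" by (metis fun_upd_triv fun_upd_upd)
      thus "g \<in> G" unfolding G_def using g0 by auto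
    next
      assume "g \<in> G"
      then obtain j where j: "j < d 0" "g = (\<beta> j)(0:=j)" unfolding G_def by auto
      have "\<beta> j 0 = 0" using bR[OF j(1)] unfolding Rt_def by auto
      thus "g(0:=0) = \<beta> (g 0)" using j by auto
    qed
    thus ?thesis unfolding T_def using g by simp
  qed
  have Gsub: "G \<subseteq> tidx n d"
  proof
    fix g assume "g \<in> G"
    then obtain j where j: "j < d 0" "g = (\<beta> j)(0:=j)" unfolding G_def by auto
    thus "g \<in> tidx n d" using bR[OF j(1)] n unfolding Rt_def tidx_def by auto
  qed
  have inj: "inj_on (\<lambda>j. (\<beta> j)(0:=j)) {..<d 0}"
    by (rule inj_onI) (metis fun_upd_same)
  have "local_apply n d C (T n d (\<lambda>k x. if x = \<beta> k then 1 else 0)) f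
      = (\<Sum>g\<in>tidx n d. (if g \<in> G then F g else 0))"
    unfolding la_eval[OF f] F_def by (intro sum.cong refl) (simp add: Tv)
  also have "\<dots> = (\<Sum>g\<in>G. F g)"
    using Gsub by (simp add: sum.inter_restrict[symmetric, OF finite_tidx] Int_absorb1)
  also have "\<dots> = (\<Sum>j<d 0. F ((\<beta> j)(0:=j)))"
    unfolding G_def by (rule sum.reindex[OF inj, unfolded comp_def])
  also have "\<dots> = (\<Sum>j<d 0. C 0 (f 0) j * (\<Prod>i\<in>{1..<n}. C i (f i) (\<beta> j i)))"
    unfolding F_def prod_split0[OF n] by (intro sum.cong refl arg_cong2[where f="(*)"] prod.cong) auto
  finally show ?thesis .
qed

lemma contraction:
  assumes i: "i < n" and u: "\<And>c. c < d i \<Longrightarrow> (\<Sum>r<d i. u r * A i r c) = 0"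
    and f: "f \<in> tidx n d"
  shows "(\<Sum>x<d i. u x * local_apply n d A \<phi> (f(i:=x))) = 0"
proof -
  have fx: "f(i:=x) \<in> tidx n d" if "x < d i" for x using f that i unfolding tidx_def by auto
  have pr: "(\<Prod>l<n. A l ((f(i:=x)) l) (h l)) = A i x (h i) * (\<Prod>l\<in>{..<n}-{i}. A l (f l) (h l))" for x h
  proof -
    have "(\<Prod>l<n. A l ((f(i:=x)) l) (h l)) = A i x (h i) * (\<Prod>l\<in>{..<n}-{i}. A l ((f(i:=x)) l) (h l))"
      using i by (subst prod.remove[of _ i]) auto
    also have "(\<Prod>l\<in>{..<n}-{i}. A l ((f(i:=x)) l) (h l)) = (\<Prod>l\<in>{..<n}-{i}. A l (f l) (h l))"
      by (intro prod.cong) auto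
    finally show ?thesis .
  qed
  have "(\<Sum>x<d i. u x * local_apply n d A \<phi> (f(i:=x)))
      = (\<Sum>x<d i. \<Sum>h\<in>tidx n d. u x * (A i x (h i) * (\<Prod>l\<in>{..<n}-{i}. A l (f l) (h l)) * \<phi> h))"
  proof (intro sum.cong refl)
    fix x assume x: "x \<in> {..<d i}"
    show "u x * local_apply n d A \<phi> (f(i:=x)) = (\<Sum>h\<in>tidx n d. u x * (A i x (h i) * (\<Prod>l\<in>{..<n}-{i}. A l (f l) (h l)) * \<phi> h))"
      using x by (subst la_eval[OF fx]) (simp_all only: pr sum_distrib_left lessThan_iff)
  qed
  also have "\<dots> = (\<Sum>h\<in>tidx n d. (\<Sum>x<d i. u x * A i x (h i)) * ((\<Prod>l\<in>{..<n}-{i}. A l (f l) (h l)) * \<phi> h))"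
    by (subst sum.swap) (simp add: sum_distrib_right mult.assoc)
  also have "\<dots> = 0"
    by (intro sum.neutral ballI) (simp add: u tidx_def i)
  finally show ?thesis .
qed

lemma subset_card_between:
  assumes "finite B" "A \<subseteq> B" "card A \<le> k" "k \<le> card B"
  shows "\<exists>S. A \<subseteq> S \<and> S \<subseteq> B \<and> card S = k"
proof -
  have fA: "finite A" using assms finite_subset by blast
  have "card (B - A) = card B - card A" using assms fA by (simp add: card_Diff_subset)
  hence "k - card A \<le> card (B - A)" using assms by simp
  then obtain T where T: "T \<subseteq> B - A" "card T = k - card A"
    using obtain_subset_with_card_n by metis
  have fT: "finite T" using T(1) assms(1) finite_subset by blast
  have "card (A \<union> T) = card A + card T" using T fA fT by (subst card_Un_disjoint) auto
  thus ?thesis using T assms by (intro exI[of _ "A \<union> T"]) auto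
qed

lemma rk_triv:
  fixes m :: nat
  assumes N: "\<forall>r<m. \<forall>c<m. (\<Sum>k<m. N r k * M k c) = (if r = c then 1 else (0::complex))"
    and v: "\<And>k. k < m \<Longrightarrow> (\<Sum>j<m. M k j * v j) = 0" and r: "r < m"
  shows "v r = 0"
proof -
  have "(\<Sum>c<m. (if r = c then 1 else 0) * v c) = (\<Sum>c<m. if r = c then v c else 0)"
    by (intro sum.cong) auto
  moreover have "(\<Sum>c<m. if r = c then v c else 0) = v r" using r by (subst sum.delta') auto
  ultimately have "v r = (\<Sum>c<m. (if r = c then 1 else 0) * v c)" by simp
  also have "\<dots> = (\<Sum>c<m. (\<Sum>k<m. N r k * M k c) * v c)"
    using N r by (intro sum.cong refl) auto
  also have "\<dots> = (\<Sum>k<m. N r k * (\<Sum>c<m. M k c * v c))"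
  proof -
    have "(\<Sum>c<m. (\<Sum>k<m. N r k * M k c) * v c) = (\<Sum>c<m. \<Sum>k<m. N r k * (M k c * v c))"
      by (simp add: sum_distrib_right mult.assoc)
    also have "\<dots> = (\<Sum>k<m. \<Sum>c<m. N r k * (M k c * v c))" by (rule sum.swap)
    also have "\<dots> = (\<Sum>k<m. N r k * (\<Sum>c<m. M k c * v c))" by (simp add: sum_distrib_left)
    finally show ?thesis .
  qed
  also have "\<dots> = 0" using v by simp
  finally show ?thesis .
qed

lemma S2:
  fixes M :: "nat \<Rightarrow> nat \<Rightarrow> complex"
  assumes s: "s < m"
  shows "\<exists>v. (\<exists>y<m. v y \<noteq> 0) \<and> ((\<forall>c<m. (\<Sum>r<m. v r * M r c) = 0) \<or>
          (\<forall>c<m. (\<Sum>r<m. v r * M r c) = (if c = s then 1 else 0)))"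
proof (cases "\<exists>v. (\<forall>c<m. (\<Sum>r<m. v r * M r c) = 0) \<and> \<not> (\<forall>r<m. v r = 0)")
  case True thus ?thesis by blast
next
  case False
  then obtain N where N: "\<forall>r<m. \<forall>c<m. (\<Sum>k<m. N r k * M k c) = (if r = c then 1 else 0)"
    using mat_inv[of m M] by blast
  have "N s s \<noteq> 0 \<or> True" by simp
  show ?thesis
  proof (intro exI[of _ "N s"] conjI disjI2 allI impI)
    show "\<exists>y<m. N s y \<noteq> 0"
    proof (rule ccontr)
      assume "\<not> (\<exists>y<m. N s y \<noteq> 0)"
      hence "(\<Sum>k<m. N s k * M k s) = 0" by simp
      thus False using N s by auto
    qed
    fix c assume "c < m" thus "(\<Sum>r<m. N s r * M r c) = (if c = s then 1 else 0)" using N s by auto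
  qed
qed

definition pa :: "nat \<Rightarrow> nat" where "pa = (\<lambda>_. 0)"
definition pb :: "nat \<Rightarrow> nat" where "pb = (\<lambda>i. if i = 1 \<or> i = 2 then 1 else 0)"
definition pc :: "nat \<Rightarrow> nat" where "pc = (\<lambda>i. if i = 1 then 1 else 0)"
definition pc' :: "nat \<Rightarrow> nat" where "pc' = (\<lambda>i. if i = 2 then 1 else 0)"

lemma p_distinct: "pa \<noteq> pb" "pa \<noteq> pc'" "pb \<noteq> pc'" "pa \<noteq> pc" "pb \<noteq> pc" "pc \<noteq> pc'"
proof -
  have "pa 1 \<noteq> pb 1" "pa 2 \<noteq> pc' 2" "pb 1 \<noteq> pc' 1" "pa 1 \<noteq> pc 1" "pb 2 \<noteq> pc 2" "pc 1 \<noteq> pc' 1"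
    unfolding pa_def pb_def pc_def pc'_def by simp_all
  thus "pa \<noteq> pb" "pa \<noteq> pc'" "pb \<noteq> pc'" "pa \<noteq> pc" "pb \<noteq> pc" "pc \<noteq> pc'" by auto
qed

lemma p_Rt: assumes "3 \<le> n" "2 \<le> d 1" "2 \<le> d 2" "\<forall>i<n. 0 < d i"
  shows "pa \<in> Rt n d" "pb \<in> Rt n d" "pc \<in> Rt n d" "pc' \<in> Rt n d"
  using assms unfolding Rt_def tidx_def pa_def pb_def pc_def pc'_def by auto

lemma p_prod: "(\<Prod>i\<in>{1..<n}. F i (pa i)) * (\<Prod>i\<in>{1..<n}. F i (pb i))
   = (\<Prod>i\<in>{1..<n}. F i (pc i)) * (\<Prod>i\<in>{1..<n}. (F i (pc' i) :: complex))"
proof -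
  have "(\<Prod>i\<in>{1..<n}. F i (pa i)) * (\<Prod>i\<in>{1..<n}. F i (pb i)) = (\<Prod>i\<in>{1..<n}. F i (pa i) * F i (pb i))"
    by (simp add: prod.distrib)
  also have "\<dots> = (\<Prod>i\<in>{1..<n}. F i (pc i) * F i (pc' i))"
    by (intro prod.cong refl) (auto simp: pa_def pb_def pc_def pc'_def mult.commute)
  also have "\<dots> = (\<Prod>i\<in>{1..<n}. F i (pc i)) * (\<Prod>i\<in>{1..<n}. F i (pc' i))"
    by (simp add: prod.distrib)
  finally show ?thesis .
qed

definition W2 :: "(nat \<Rightarrow> nat \<Rightarrow> nat) \<Rightarrow> nat \<Rightarrow> (nat \<Rightarrow> nat) \<Rightarrow> complex" where
  "W2 \<gamma> k x = (if k = 0 then (if x = pa then 1 else 0) - (if x = pb then 1 else 0)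
                else (if x = \<gamma> k then 1 else 0))"

lemma caseB:
  fixes D :: nat and C :: "nat \<Rightarrow> nat \<Rightarrow> nat \<Rightarrow> complex" and R :: "(nat \<Rightarrow> nat) set"
  assumes D: "0 < D"
    and pR: "pa \<in> R" "pb \<in> R" "pc \<in> R" "pc' \<in> R"
    and gR: "\<And>k. 1 \<le> k \<Longrightarrow> k < D \<Longrightarrow> \<gamma> k \<in> R - {pa, pb, pc'}"
    and ginj: "inj_on \<gamma> {1..<D}"
    and F: "\<And>k x. k < D \<Longrightarrow> x \<in> R \<Longrightarrow> W2 \<gamma> k x = (\<Sum>j<D. C 0 k j * (\<Prod>i\<in>{1..<n}. C i (x i) (\<beta> j i)))"
  shows False
proof -
  define q where "q = (\<lambda>j x. \<Prod>i\<in>{1..<n}. C i (x i) (\<beta> j i))"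
  have F': "\<And>k x. k < D \<Longrightarrow> x \<in> R \<Longrightarrow> W2 \<gamma> k x = (\<Sum>j<D. C 0 k j * q j x)"
    using F unfolding q_def by simp
  have lk: "\<forall>r<D. u r = 0" if u: "\<forall>j<D. (\<Sum>k<D. u k * C 0 k j) = 0" for u
  proof -
    have zero: "(\<Sum>k<D. u k * W2 \<gamma> k x) = 0" if x: "x \<in> R" for x
    proof -
      have "(\<Sum>k<D. u k * W2 \<gamma> k x) = (\<Sum>k<D. \<Sum>j<D. u k * (C 0 k j * q j x))"
        using x by (intro sum.cong refl) (simp add: F' sum_distrib_left)
      also have "\<dots> = (\<Sum>j<D. \<Sum>k<D. u k * (C 0 k j * q j x))" by (rule sum.swap)
      also have "\<dots> = (\<Sum>j<D. (\<Sum>k<D. u k * C 0 k j) * q j x)"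
        by (simp add: sum_distrib_right mult.assoc)
      also have "\<dots> = 0" using u by simp
      finally show ?thesis .
    qed
    show ?thesis
    proof (intro allI impI)
      fix r assume r: "r < D"
      show "u r = 0"
      proof (cases "r = 0")
        case True
        have "(\<Sum>k<D. u k * W2 \<gamma> k pa) = (\<Sum>k<D. if 0 = k then u 0 else 0)"
        proof (intro sum.cong refl)
          fix k assume k: "k \<in> {..<D}"
          thus "u k * W2 \<gamma> k pa = (if 0 = k then u 0 else 0)"
            using gR[of k] k p_distinct by (auto simp: W2_def)
        qed
        thus ?thesis using zero[OF pR(1)] True D by simp
      next
        case False
        have gr: "\<gamma> r \<in> R" "\<gamma> r \<noteq> pa" "\<gamma> r \<noteq> pb" using gR[of r] r False by auto
        have "(\<Sum>k<D. u k * W2 \<gamma> k (\<gamma> r)) = (\<Sum>k<D. if r = k then u r else 0)"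
        proof (intro sum.cong refl)
          fix k assume k: "k \<in> {..<D}"
          show "u k * W2 \<gamma> k (\<gamma> r) = (if r = k then u r else 0)"
          proof (cases "k = 0")
            case True thus ?thesis using gr False by (auto simp: W2_def)
          next
            case k0: False
            have "\<gamma> r = \<gamma> k \<longleftrightarrow> r = k"
              using inj_onD[OF ginj, of r k] k k0 r False by auto
            thus ?thesis using k0 by (auto simp: W2_def)
          qed
        qed
        thus ?thesis using zero[OF gr(1)] r by simp
      qed
    qed
  qed
  obtain N where N: "\<forall>r<D. \<forall>c<D. (\<Sum>k<D. N r k * C 0 k c) = (if r = c then 1 else 0)"
    using mat_inv[of D "C 0"] lk by blast
  have qc': "q j pc' = 0" if j: "j < D" for j
  proof (rule rk_triv[OF N _ j])
    fix k assume k: "k < D"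
    have "W2 \<gamma> k pc' = 0" using gR[of k] k p_distinct by (auto simp: W2_def)
    thus "(\<Sum>j<D. C 0 k j * q j pc') = 0" using F'[OF k pR(4)] by simp
  qed
  have qab: "q j pa + q j pb = 0" if j: "j < D" for j
  proof (rule rk_triv[OF N _ j, where v="\<lambda>j. q j pa + q j pb"])
    fix k assume k: "k < D"
    have "W2 \<gamma> k pa + W2 \<gamma> k pb = 0" using gR[of k] k p_distinct by (auto simp: W2_def)
    thus "(\<Sum>j<D. C 0 k j * (q j pa + q j pb)) = 0" using F'[OF k pR(1)] F'[OF k pR(2)]
      by (simp add: distrib_left sum.distrib)
  qed
  have qa: "q j pa = 0" if j: "j < D" for j
  proof -
    have "q j pa * q j pb = q j pc * q j pc'" unfolding q_def by (rule p_prod)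
    hence "q j pa * q j pb = 0" using qc'[OF j] by simp
    moreover have "q j pb = - q j pa" using qab[OF j] by (simp add: eq_neg_iff_add_eq_0 add.commute)
    ultimately show ?thesis by simp
  qed
  have "W2 \<gamma> 0 pa = 1" using p_distinct by (simp add: W2_def)
  moreover have "W2 \<gamma> 0 pa = 0" using F'[OF D pR(1)] qa by simp
  ultimately show False by simp
qed

lemma caseA:
  fixes D :: nat and C :: "nat \<Rightarrow> nat \<Rightarrow> nat \<Rightarrow> complex"
  assumes n: "0 < n" and d0: "0 < d 0" and D: "D = d 0"
    and pR: "pa \<in> Rt n d" "pb \<in> Rt n d" "pc \<in> Rt n d" "pc' \<in> Rt n d"
    and gR: "\<gamma> ` {1..<D} = Rt n d - {pa, pb}"
    and bR: "\<And>j. j < D \<Longrightarrow> \<beta> j \<in> Rt n d"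
    and sR: "\<sigma> \<in> Rt n d" and sn: "\<sigma> \<notin> \<beta> ` {..<D}"
    and F: "\<And>k x. k < D \<Longrightarrow> x \<in> Rt n d \<Longrightarrow> W2 \<gamma> k x = (\<Sum>j<D. C 0 k j * (\<Prod>i\<in>{1..<n}. C i (x i) (\<beta> j i)))"
  shows False
proof -
  define q where "q = (\<lambda>j x. \<Prod>i\<in>{1..<n}. C i (x i) (\<beta> j i))"
  have F': "\<And>k x. k < D \<Longrightarrow> x \<in> Rt n d \<Longrightarrow> W2 \<gamma> k x = (\<Sum>j<D. C 0 k j * q j x)"
    using F unfolding q_def by simp
  have "\<forall>i. \<exists>v. i \<in> {1..<n} \<longrightarrow> (\<exists>y<d i. v y \<noteq> 0) \<and> ((\<forall>c<d i. (\<Sum>r<d i. v r * C i r c) = 0) \<or>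
          (\<forall>c<d i. (\<Sum>r<d i. v r * C i r c) = (if c = \<sigma> i then 1 else 0)))"
  proof
    fix i show "\<exists>v. i \<in> {1..<n} \<longrightarrow> (\<exists>y<d i. v y \<noteq> 0) \<and> ((\<forall>c<d i. (\<Sum>r<d i. v r * C i r c) = 0) \<or>
          (\<forall>c<d i. (\<Sum>r<d i. v r * C i r c) = (if c = \<sigma> i then 1 else 0)))"
    proof (cases "i \<in> {1..<n}")
      case True
      hence "\<sigma> i < d i" using sR unfolding Rt_def tidx_def by auto
      thus ?thesis using S2[of "\<sigma> i" "d i" "C i"] by blast
    next
      case False thus ?thesis by blast
    qed
  qed
  from choice[OF this] obtain G where G0: "\<forall>i. i \<in> {1..<n} \<longrightarrow> (\<exists>y<d i. G i y \<noteq> 0) \<and> ((\<forall>c<d i. (\<Sum>r<d i. G i r * C i r c) = 0) \<or>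
          (\<forall>c<d i. (\<Sum>r<d i. G i r * C i r c) = (if c = \<sigma> i then 1 else 0)))"
    by blast
  have G: "\<And>i. i \<in> {1..<n} \<Longrightarrow> (\<exists>y<d i. G i y \<noteq> 0) \<and> ((\<forall>c<d i. (\<Sum>r<d i. G i r * C i r c) = 0) \<or>
          (\<forall>c<d i. (\<Sum>r<d i. G i r * C i r c) = (if c = \<sigma> i then 1 else 0)))"
    using G0 by blast
  define P where "P = (\<lambda>x. \<Prod>i\<in>{1..<n}. G i (x i))"
  have Pq: "(\<Sum>x\<in>Rt n d. P x * q j x) = 0" if j: "j < D" for j
  proof -
    have "(\<Sum>x\<in>Rt n d. P x * q j x) = (\<Sum>x\<in>Rt n d. \<Prod>i\<in>{1..<n}. G i (x i) * C i (x i) (\<beta> j i))"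
      unfolding P_def q_def by (simp add: prod.distrib)
    also have "\<dots> = (\<Prod>i\<in>{1..<n}. \<Sum>y<d i. G i y * C i y (\<beta> j i))"
      by (rule prodsum_R[where n=n and d=d, OF n d0])
    also have "\<dots> = 0"
    proof (rule ccontr)
      assume nz: "(\<Prod>i\<in>{1..<n}. \<Sum>y<d i. G i y * C i y (\<beta> j i)) \<noteq> 0"
      have eq: "\<beta> j i = \<sigma> i" if i: "i \<in> {1..<n}" for i
      proof -
        have f: "(\<Sum>y<d i. G i y * C i y (\<beta> j i)) \<noteq> 0" using nz i by auto
        have bi: "\<beta> j i < d i" using bR[OF j] i unfolding Rt_def tidx_def by auto
        have "(\<Sum>y<d i. G i y * C i y (\<beta> j i)) = (if \<beta> j i = \<sigma> i then 1 else 0)"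
          using G[OF i] f bi by blast
        thus ?thesis using f by (cases "\<beta> j i = \<sigma> i") auto
      qed
      have "\<beta> j = \<sigma>"
      proof
        fix i show "\<beta> j i = \<sigma> i"
        proof (cases "i = 0")
          case True thus ?thesis using bR[OF j] sR unfolding Rt_def by auto
        next
          case False
          show ?thesis
          proof (cases "i < n")
            case True thus ?thesis using eq False by auto
          next
            case False thus ?thesis using bR[OF j] sR unfolding Rt_def tidx_def by auto
          qed
        qed
      qed
      thus False using sn j by auto
    qed
    finally show ?thesis .
  qed
  have PW: "(\<Sum>x\<in>Rt n d. P x * W2 \<gamma> k x) = 0" if k: "k < D" for k
  proof -
    have "(\<Sum>x\<in>Rt n d. P x * W2 \<gamma> k x) = (\<Sum>x\<in>Rt n d. \<Sum>j<D. C 0 k j * (P x * q j x))"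
      using k by (intro sum.cong refl) (simp add: F' sum_distrib_left mult.left_commute)
    also have "\<dots> = (\<Sum>j<D. \<Sum>x\<in>Rt n d. C 0 k j * (P x * q j x))" by (rule sum.swap)
    also have "\<dots> = (\<Sum>j<D. C 0 k j * (\<Sum>x\<in>Rt n d. P x * q j x))" by (simp add: sum_distrib_left)
    also have "\<dots> = 0" using Pq by simp
    finally show ?thesis .
  qed
  have Pg: "P x = 0" if x: "x \<in> Rt n d - {pa, pb}" for x
  proof -
    obtain k where k: "k \<in> {1..<D}" "x = \<gamma> k" using x gR by (metis (no_types, lifting) imageE)
    have "(\<Sum>y\<in>Rt n d. P y * W2 \<gamma> k y) = (\<Sum>y\<in>Rt n d. if x = y then P y else 0)"
      using k by (intro sum.cong refl) (auto simp: W2_def)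
    also have "\<dots> = P x" using x finite_Rt by simp
    finally show ?thesis using PW[of k] k by simp
  qed
  have "(\<Sum>y\<in>Rt n d. P y * W2 \<gamma> 0 y) = (\<Sum>y\<in>Rt n d. (if pa = y then P y else 0) - (if pb = y then P y else 0))"
    by (intro sum.cong refl) (auto simp: W2_def)
  also have "\<dots> = P pa - P pb" using pR finite_Rt by (simp add: sum_subtractf)
  finally have ab: "P pa = P pb" using PW[of 0] D d0 by simp
  have "P pa * P pb = P pc * P pc'" unfolding P_def by (rule p_prod)
  also have "P pc' = 0" using Pg[of pc'] pR(4) p_distinct by simp
  finally have "P pa = 0" using ab by simp
  hence P0: "P x = 0" if "x \<in> Rt n d" for x
  proof -
    assume pa0: "P pa = 0"
    show ?thesis
    proof (cases "x = pa \<or> x = pb")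
      case True thus ?thesis using pa0 ab by auto
    next
      case False thus ?thesis using Pg that by simp
    qed
  qed
  have "\<forall>i. \<exists>y. i \<in> {1..<n} \<longrightarrow> y < d i \<and> G i y \<noteq> 0" using G by blast
  from choice[OF this] obtain Y where Y0: "\<forall>i. i \<in> {1..<n} \<longrightarrow> Y i < d i \<and> G i (Y i) \<noteq> 0" by blast
  have Y: "\<And>i. i \<in> {1..<n} \<Longrightarrow> Y i < d i \<and> G i (Y i) \<noteq> 0" using Y0 by blast
  define xs where "xs = (\<lambda>i. if 1 \<le> i \<and> i < n then Y i else 0)"
  have "xs \<in> Rt n d" unfolding xs_def Rt_def tidx_def using Y d0 by (auto simp: Suc_le_eq)
  moreover have "P xs \<noteq> 0" unfolding P_def xs_def using Y by (auto simp: prod_zero_iff)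
  ultimately show False using P0 by blast
qed

lemma core:
  fixes w :: "nat \<Rightarrow> (nat \<Rightarrow> nat) \<Rightarrow> complex"
  assumes n: "0 < n" and dpos: "\<forall>i<n. 0 < d i"
   and bR: "\<And>j. j < d 0 \<Longrightarrow> \<beta> j \<in> Rt n d" and binj: "inj_on \<beta> {..<d 0}"
   and cover: "\<And>i y. 1 \<le> i \<Longrightarrow> i < n \<Longrightarrow> y < d i \<Longrightarrow> \<exists>j<d 0. \<beta> j i = y"
   and sme: "stoch_max_entangled n d \<phi>0"
  shows "\<exists>C. \<forall>k<d 0. \<forall>x\<in>Rt n d. w k x = (\<Sum>j<d 0. C 0 k j * (\<Prod>i\<in>{1..<n}. C i (x i) (\<beta> j i)))"
proof -
  define \<phi>1 where "\<phi>1 = T n d (\<lambda>k x. if x = \<beta> k then 1 else 0)"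
  have H0: "in_H n d \<phi>0" and all: "\<And>\<phi>. in_H n d \<phi> \<Longrightarrow> \<exists>L. local_apply n d L \<phi>0 = \<phi>"
    using sme unfolding stoch_max_entangled_def slocc_le_def by auto
  obtain A where A: "local_apply n d A \<phi>0 = \<phi>1" using all[OF T_H] unfolding \<phi>1_def by blast
  have \<phi>1v: "\<phi>1 g = (if g(0:=0) = \<beta> (g 0) then 1 else 0)" if "g \<in> tidx n d" for g
    using that unfolding \<phi>1_def T_def by simp
  have d0: "0 < d 0" using dpos n by auto
  have lk: "\<forall>y<d i. u y = 0" if i: "i < n" and u: "\<forall>c<d i. (\<Sum>r<d i. u r * A i r c) = 0" for i u
  proof (intro allI impI)
    fix y assume y: "y < d i"
    have "\<exists>f\<in>tidx n d. \<forall>x<d i. \<phi>1 (f(i:=x)) = (if x = y then 1 else 0)"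
    proof (cases "i = 0")
      case True
      have bY: "\<beta> y \<in> Rt n d" using bR y True by auto
      have "(\<beta> y)(0:=y) \<in> tidx n d" using bY y True n unfolding Rt_def tidx_def by auto
      moreover have "\<phi>1 (((\<beta> y)(0:=y))(i:=x)) = (if x = y then 1 else 0)" if x: "x < d i" for x
      proof -
        have m: "((\<beta> y)(0:=y))(i:=x) = (\<beta> y)(0:=x)" using True by simp
        have t: "(\<beta> y)(0:=x) \<in> tidx n d" using bY x True n unfolding Rt_def tidx_def by auto
        have b0: "\<beta> y 0 = 0" using bY unfolding Rt_def by auto
        have "((\<beta> y)(0:=x))(0:=0) = \<beta> y" using b0 by auto
        moreover have "\<beta> y = \<beta> x \<longleftrightarrow> x = y" using inj_onD[OF binj, of x y] x y True by auto
        ultimately show ?thesis unfolding m \<phi>1v[OF t] by auto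
      qed
      ultimately show ?thesis by blast
    next
      case False
      obtain j where j: "j < d 0" "\<beta> j i = y" using cover[of i y] False i y by auto
      have bj: "\<beta> j \<in> Rt n d" using bR j by auto
      have b0: "\<beta> j 0 = 0" using bj unfolding Rt_def by auto
      have "(\<beta> j)(0:=j) \<in> tidx n d" using bj j n unfolding Rt_def tidx_def by auto
      moreover have "\<phi>1 (((\<beta> j)(0:=j))(i:=x)) = (if x = y then 1 else 0)" if x: "x < d i" for x
      proof -
        have t: "((\<beta> j)(0:=j))(i:=x) \<in> tidx n d" using bj x j i n unfolding Rt_def tidx_def by auto
        have e0: "(((\<beta> j)(0:=j))(i:=x)) 0 = j" using False by simp
        have e1: "(((\<beta> j)(0:=j))(i:=x))(0:=0) = (\<beta> j)(i:=x)" using False b0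
          by (auto simp: fun_eq_iff)
        have "(\<beta> j)(i:=x) = \<beta> j \<longleftrightarrow> x = y" using j(2) by (auto simp: fun_upd_idem_iff)
        thus ?thesis unfolding \<phi>1v[OF t] e0 e1 by auto
      qed
      ultimately show ?thesis by blast
    qed
    then obtain f where f: "f \<in> tidx n d" "\<And>x. x < d i \<Longrightarrow> \<phi>1 (f(i:=x)) = (if x = y then 1 else 0)" by blast
    have "(\<Sum>x<d i. u x * local_apply n d A \<phi>0 (f(i:=x))) = 0"
      by (rule contraction[OF i _ f(1)]) (use u in auto)
    hence "(\<Sum>x<d i. u x * (if x = y then 1 else 0)) = 0" unfolding A using f(2) by simp
    moreover have "(\<Sum>x<d i. u x * (if x = y then 1 else 0)) = (\<Sum>x<d i. if y = x then u x else 0)"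
      by (intro sum.cong) auto
    ultimately show "u y = 0" using y by simp
  qed
  have "\<forall>i. \<exists>N. i < n \<longrightarrow> (\<forall>r<d i. \<forall>c<d i. (\<Sum>k<d i. N r k * A i k c) = (if r = c then 1 else 0))"
  proof
    fix i show "\<exists>N. i < n \<longrightarrow> (\<forall>r<d i. \<forall>c<d i. (\<Sum>k<d i. N r k * A i k c) = (if r = c then 1 else 0))"
    proof (cases "i < n")
      case True
      thus ?thesis using mat_inv[of "d i" "A i"] lk[OF True] by blast
    next
      case False thus ?thesis by blast
    qed
  qed
  from choice[OF this] obtain Ninv where Ninv0:
    "\<forall>i. i < n \<longrightarrow> (\<forall>r<d i. \<forall>c<d i. (\<Sum>k<d i. Ninv i r k * A i k c) = (if r = c then 1 else 0))"
    by blast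
  have \<phi>0: "local_apply n d Ninv \<phi>1 = \<phi>0"
  proof -
    have "local_apply n d Ninv \<phi>1 = local_apply n d (\<lambda>i r c. \<Sum>k<d i. Ninv i r k * A i k c) \<phi>0"
      unfolding A[symmetric] by (rule la_comp)
    also have "\<dots> = local_apply n d (\<lambda>i r c. if r = c then 1 else 0) \<phi>0"
      by (rule la_cong) (use Ninv0 in auto)
    also have "\<dots> = \<phi>0" by (rule la_id[OF H0])
    finally show ?thesis .
  qed
  obtain B where B: "local_apply n d B \<phi>0 = T n d w" using all[OF T_H] by blast
  define C where "C = (\<lambda>i r c. \<Sum>k<d i. B i r k * Ninv i k c)"
  have CT: "local_apply n d C \<phi>1 = T n d w"
    unfolding C_def B[symmetric] \<phi>0[symmetric] by (rule la_comp[symmetric])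
  show ?thesis
  proof (intro exI[of _ C] allI impI ballI)
    fix k x assume k: "k < d 0" and x: "x \<in> Rt n d"
    have xt: "x(0:=k) \<in> tidx n d" using x k n unfolding Rt_def tidx_def by auto
    have "w k x = T n d w (x(0:=k))" using T_at[OF x k n] by simp
    also have "\<dots> = local_apply n d C \<phi>1 (x(0:=k))" unfolding CT ..
    also have "\<dots> = (\<Sum>j<d 0. C 0 ((x(0:=k)) 0) j * (\<Prod>i\<in>{1..<n}. C i ((x(0:=k)) i) (\<beta> j i)))"
      unfolding \<phi>1_def by (rule key[OF n bR xt])
    also have "\<dots> = (\<Sum>j<d 0. C 0 k j * (\<Prod>i\<in>{1..<n}. C i (x i) (\<beta> j i)))"
      by (intro sum.cong refl arg_cong2[where f="(*)"] prod.cong) auto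
    finally show "w k x = (\<Sum>j<d 0. C 0 k j * (\<Prod>i\<in>{1..<n}. C i (x i) (\<beta> j i)))" .
  qed
qed

lemma shift_bij:
  assumes "finite S" "card S = D - 1" "0 < D"
  shows "\<exists>\<gamma>. bij_betw \<gamma> {1..<D} S"
proof -
  obtain h where h: "bij_betw h {0..<card S} S" using ex_bij_betw_nat_finite[OF assms(1)] by blast
  have s: "bij_betw (\<lambda>k. k - 1) {1..<D} {0..<card S}"
    unfolding assms(2) bij_betw_def
  proof
    show "inj_on (\<lambda>k. k - 1) {1..<D}" by (rule inj_onI) auto
    show "(\<lambda>k. k - 1) ` {1..<D} = {0..<D - 1}"
    proof (intro equalityI subsetI)
      fix x assume "x \<in> {0..<D - 1}"
      thus "x \<in> (\<lambda>k. k - 1) ` {1..<D}" by (intro image_eqI[of _ _ "x + 1"]) auto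
    qed auto
  qed
  show ?thesis using bij_betw_trans[OF s h] by (auto simp: comp_def)
qed

theorem theorem1:
  fixes n :: nat and d :: "nat \<Rightarrow> nat"
  assumes "n \<ge> 2"
    and "\<And>i j. i \<le> j \<Longrightarrow> j < n \<Longrightarrow> d j \<le> d i"
    and "\<And>i. i < n \<Longrightarrow> d i \<ge> 2"
    and "d 0 < (\<Prod>i\<in>{1..<n}. d i)"
  shows "\<not> (\<exists>\<phi>0. stoch_max_entangled n d \<phi>0)"
proof
  assume "\<exists>\<phi>0. stoch_max_entangled n d \<phi>0"
  then obtain \<phi>0 where sme: "stoch_max_entangled n d \<phi>0" by blast
  define D where "D = d 0"
  define N where "N = (\<Prod>i\<in>{1..<n}. d i)"
  have n0: "0 < n" using assms(1) by simp
  have dpos: "\<forall>i<n. 0 < d i" using assms(3) by (metis less_le_trans zero_less_numeral)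
  have d0: "0 < d 0" using dpos n0 by auto
  have DN: "D < N" using assms(4) unfolding D_def N_def .
  have n3: "3 \<le> n"
  proof (rule ccontr)
    assume "\<not> 3 \<le> n"
    hence "n = 2" using assms(1) by simp
    hence "N = d 1" unfolding N_def by (simp add: numeral_2_eq_2)
    moreover have "d 1 \<le> d 0" using assms(2)[of 0 1] \<open>n = 2\<close> by simp
    ultimately show False using DN unfolding D_def by simp
  qed
  have d1: "2 \<le> d 1" "2 \<le> d 2" using assms(3) n3 by auto
  have dle1: "d i \<le> d 1" if "1 \<le> i" "i < n" for i using assms(2) that by simp
  have d1D: "d 1 \<le> D" unfolding D_def using assms(2)[of 0 1] n3 by simp
  have cardR: "card (Rt n d) = N" unfolding N_def by (rule card_Rt[where n=n and d=d, OF n0 d0])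
  define \<delta> where "\<delta> = (\<lambda>y i. if 1 \<le> i \<and> i < n then min y (d i - 1) else (0::nat))"
  have \<delta>R: "\<delta> y \<in> Rt n d" for y
    unfolding \<delta>_def Rt_def tidx_def using dpos by (auto simp: min_def)
  have \<delta>inj: "inj_on \<delta> {..<d 1}"
  proof (rule inj_onI)
    fix x y assume "x \<in> {..<d 1}" "y \<in> {..<d 1}" "\<delta> x = \<delta> y"
    hence "\<delta> x 1 = \<delta> y 1" "x < d 1" "y < d 1" by auto
    thus "x = y" unfolding \<delta>_def using n3 by (auto simp: min_def split: if_splits)
  qed
  have cD: "card (\<delta> ` {..<d 1}) \<le> D" using card_image[OF \<delta>inj] d1D by simp
  obtain S1 where S1: "\<delta> ` {..<d 1} \<subseteq> S1" "S1 \<subseteq> Rt n d" "card S1 = D"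
    using subset_card_between[OF finite_Rt, of "\<delta> ` {..<d 1}" n d D] \<delta>R cD DN cardR by auto
  have fS1: "finite S1" using S1(2) finite_Rt finite_subset by blast
  obtain \<beta> where \<beta>: "bij_betw \<beta> {0..<card S1} S1" using ex_bij_betw_nat_finite[OF fS1] by blast
  hence \<beta>': "bij_betw \<beta> {..<D} S1" using S1(3) by (simp add: atLeast0LessThan)
  have bR: "\<And>j. j < d 0 \<Longrightarrow> \<beta> j \<in> Rt n d" using bij_betwE[OF \<beta>'] S1(2) unfolding D_def by auto
  have binj: "inj_on \<beta> {..<d 0}" using bij_betw_imp_inj_on[OF \<beta>'] unfolding D_def .
  have bim: "\<beta> ` {..<D} = S1" using bij_betw_imp_surj_on[OF \<beta>'] .
  have cover: "\<exists>j<d 0. \<beta> j i = y" if i: "1 \<le> i" "i < n" and y: "y < d i" for i y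
  proof -
    have "y < d 1" using dle1[OF i] y by simp
    hence "\<delta> y \<in> S1" using S1(1) by auto
    then obtain j where j: "j < D" "\<beta> j = \<delta> y" using bim by (metis imageE lessThan_iff)
    have "\<delta> y i = y" unfolding \<delta>_def using i y by auto
    thus ?thesis using j unfolding D_def by metis
  qed
  have "S1 \<noteq> Rt n d" using S1(3) cardR DN by auto
  then obtain \<sigma> where \<sigma>: "\<sigma> \<in> Rt n d" "\<sigma> \<notin> S1" using S1(2) by blast
  have sn: "\<sigma> \<notin> \<beta> ` {..<D}" using \<sigma> bim by simp
  have pR: "pa \<in> Rt n d" "pb \<in> Rt n d" "pc \<in> Rt n d" "pc' \<in> Rt n d"
    using p_Rt[OF n3 d1 dpos] by auto
  have D0: "0 < D" using d0 unfolding D_def .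
  have core': "\<exists>C. \<forall>k<d 0. \<forall>x\<in>Rt n d. w k x = (\<Sum>j<d 0. C 0 k j * (\<Prod>i\<in>{1..<n}. C i (x i) (\<beta> j i)))"
    for w :: "nat \<Rightarrow> (nat \<Rightarrow> nat) \<Rightarrow> complex"
    by (rule core[OF n0 dpos bR binj cover sme]) auto
  show False
  proof (cases "D + 2 \<le> N")
    case True
    define X where "X = Rt n d - {pa, pb, pc'}"
    have "card X = N - 3" unfolding X_def using pR p_distinct cardR finite_Rt
      by (simp add: card_Diff_subset)
    hence "D - 1 \<le> card X" using True by simp
    then obtain S2 where S2: "S2 \<subseteq> X" "card S2 = D - 1" using obtain_subset_with_card_n by metis
    have fS2: "finite S2" using S2(1) finite_Rt finite_subset unfolding X_def by blast
    obtain \<gamma> where \<gamma>: "bij_betw \<gamma> {1..<D} S2" using shift_bij[OF fS2 S2(2) D0] by blast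
    obtain C where C: "\<forall>k<d 0. \<forall>x\<in>Rt n d. W2 \<gamma> k x = (\<Sum>j<d 0. C 0 k j * (\<Prod>i\<in>{1..<n}. C i (x i) (\<beta> j i)))"
      using core'[of "W2 \<gamma>"] by blast
    show False
    proof (rule caseB[OF D0 pR])
      show "\<gamma> k \<in> Rt n d - {pa, pb, pc'}" if "1 \<le> k" "k < D" for k
        using bij_betwE[OF \<gamma>] S2(1) that unfolding X_def by auto
      show "inj_on \<gamma> {1..<D}" using bij_betw_imp_inj_on[OF \<gamma>] .
      show "W2 \<gamma> k x = (\<Sum>j<D. C 0 k j * (\<Prod>i\<in>{1..<n}. C i (x i) (\<beta> j i)))"
        if "k < D" "x \<in> Rt n d" for k x using C that unfolding D_def by auto
    qed
  next
    case False
    define S2 where "S2 = Rt n d - {pa, pb}"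
    have "card S2 = N - 2" unfolding S2_def using pR p_distinct cardR finite_Rt
      by (simp add: card_Diff_subset)
    hence cS2: "card S2 = D - 1" using False DN by simp
    have fS2: "finite S2" using finite_Rt unfolding S2_def by blast
    obtain \<gamma> where \<gamma>: "bij_betw \<gamma> {1..<D} S2" using shift_bij[OF fS2 cS2 D0] by blast
    obtain C where C: "\<forall>k<d 0. \<forall>x\<in>Rt n d. W2 \<gamma> k x = (\<Sum>j<d 0. C 0 k j * (\<Prod>i\<in>{1..<n}. C i (x i) (\<beta> j i)))"
      using core'[of "W2 \<gamma>"] by blast
    show False
    proof (rule caseA[OF n0 d0 D_def pR _ _ \<sigma>(1) sn])
      show "\<gamma> ` {1..<D} = Rt n d - {pa, pb}" using bij_betw_imp_surj_on[OF \<gamma>] unfolding S2_def .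
      show "\<beta> j \<in> Rt n d" if "j < D" for j using bR that unfolding D_def by auto
      show "W2 \<gamma> k x = (\<Sum>j<D. C 0 k j * (\<Prod>i\<in>{1..<n}. C i (x i) (\<beta> j i)))"
        if "k < D" "x \<in> Rt n d" for k x using C that unfolding D_def by auto
    qed
  qed
qed

end
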